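(* For every integer $m\ge 2$ and every graph $G$, $\hom(S_0;G)\cdot\hom(S_{2,1^{m-2}};G)\ge \hom(S_{2,1^{m-1}};G)$.
   Context: All graphs are finite; $\hom(H;G)$ is the number of graph homomorphisms from $H$ to $G$ (maps $V(H)\to V(G)$ sending edges to edges). $S_0$ is the graph with one vertex and no edges. For $k\ge0$, $S_{2,1^k}$ is the tree with vertex set $\{1,\ldots,k+3\}$ and edge set $\{\{1,j\}:2\le j\le k+2\}\cup\{\{k+2,k+3\}\}$. *)

theory Defs
  imports "HOL-Library.FuncSet"
begin

definition graph :: "'a set \<Rightarrow> ('a \<Rightarrow> 'a \<Rightarrow> bool) \<Rightarrow> bool" where
  "graph V E \<longleftrightarrow> finite V \<and> (\<forall>x y. E x y \<longrightarrow> x \<in> V \<and> y \<in> V)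
      \<and> (\<forall>x y. E x y \<longrightarrow> E y x) \<and> (\<forall>x. \<not> E x x)"

definition hom_count :: "'b set \<Rightarrow> ('b \<Rightarrow> 'b \<Rightarrow> bool) \<Rightarrow> 'a set \<Rightarrow> ('a \<Rightarrow> 'a \<Rightarrow> bool) \<Rightarrow> nat" where
  "hom_count VH EH VG EG = card {f \<in> VH \<rightarrow>\<^sub>E VG. \<forall>x y. EH x y \<longrightarrow> EG (f x) (f y)}"

definition S0_V :: "nat set" where "S0_V = {1}"
definition S0_E :: "nat \<Rightarrow> nat \<Rightarrow> bool" where "S0_E x y = False"

definition S21_V :: "nat \<Rightarrow> nat set" where "S21_V k = {1..k+3}"
definition S21_edges :: "nat \<Rightarrow> nat set set" where
  "S21_edges k = {{1, j} | j. 2 \<le> j \<and> j \<le> k + 2} \<union> {{k + 2, k + 3}}"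
definition S21_E :: "nat \<Rightarrow> nat \<Rightarrow> nat \<Rightarrow> bool" where
  "S21_E k x y \<longleftrightarrow> x \<noteq> y \<and> {x, y} \<in> S21_edges k"

end

theory Submission
  imports Defs
begin

definition sig :: "nat \<Rightarrow> nat" where "sig j = (if j = 1 then 1 else j + 1)"

lemma edge_shift:
  assumes "S21_E k x y" shows "S21_E (Suc k) (sig x) (sig y)"
  using assms unfolding S21_E_def S21_edges_def sig_def
  by (auto simp: doubleton_eq_iff)

lemma edge_in:
  assumes "S21_E k x y" shows "x \<in> S21_V k" "y \<in> S21_V k"
  using assms unfolding S21_E_def S21_edges_def S21_V_def
  by (auto simp: doubleton_eq_iff)

lemma main:
  fixes V :: "'a set" and E :: "'a \<Rightarrow> 'a \<Rightarrow> bool"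
  assumes "finite V"
  shows "hom_count (S21_V (Suc k)) (S21_E (Suc k)) V E
         \<le> card V * hom_count (S21_V k) (S21_E k) V E"
proof -
  define A where "A = {f \<in> S21_V (Suc k) \<rightarrow>\<^sub>E V. \<forall>x y. S21_E (Suc k) x y \<longrightarrow> E (f x) (f y)}"
  define B where "B = {f \<in> S21_V k \<rightarrow>\<^sub>E V. \<forall>x y. S21_E k x y \<longrightarrow> E (f x) (f y)}"
  define h where "h = (\<lambda>f::nat \<Rightarrow> 'a. (f (2::nat), restrict (\<lambda>j. f (sig j)) (S21_V k)))"
  have finB: "finite B" unfolding B_def
    by (rule finite_subset[of _ "S21_V k \<rightarrow>\<^sub>E V"]) (auto intro: finite_PiE simp: assms S21_V_def)
  have maps: "h ` A \<subseteq> V \<times> B"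
  proof
    fix p assume "p \<in> h ` A"
    then obtain f where f: "f \<in> A" and p: "p = h f" by auto
    have fP: "f \<in> S21_V (Suc k) \<rightarrow>\<^sub>E V" and fE: "\<And>x y. S21_E (Suc k) x y \<Longrightarrow> E (f x) (f y)"
      using f unfolding A_def by auto
    have "f 2 \<in> V" using fP by (auto simp: S21_V_def)
    moreover have "restrict (\<lambda>j. f (sig j)) (S21_V k) \<in> B"
      unfolding B_def
    proof (intro CollectI conjI allI impI)
      show "restrict (\<lambda>j. f (sig j)) (S21_V k) \<in> S21_V k \<rightarrow>\<^sub>E V"
        using fP by (auto simp: S21_V_def sig_def PiE_iff)
    next
      fix x y assume "S21_E k x y"
      then show "E (restrict (\<lambda>j. f (sig j)) (S21_V k) x) (restrict (\<lambda>j. f (sig j)) (S21_V k) y)"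
        using edge_in[of k x y] edge_shift[of k x y] fE by auto
    qed
    ultimately show "p \<in> V \<times> B" using p h_def by auto
  qed
  have inj: "inj_on h A"
  proof
    fix f g assume f: "f \<in> A" and g: "g \<in> A" and eq: "h f = h g"
    have fP: "f \<in> S21_V (Suc k) \<rightarrow>\<^sub>E V" and gP: "g \<in> S21_V (Suc k) \<rightarrow>\<^sub>E V"
      using f g unfolding A_def by auto
    have e2: "f 2 = g 2" and er: "restrict (\<lambda>j. f (sig j)) (S21_V k) = restrict (\<lambda>j. g (sig j)) (S21_V k)"
      using eq unfolding h_def by auto
    show "f = g"
    proof (rule PiE_ext[OF fP gP])
      fix i assume i: "i \<in> S21_V (Suc k)"
      show "f i = g i"
      proof (cases "i = 2")
        case True then show ?thesis using e2 by simp
      next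
        case False
        define j where "j = (if i = 1 then 1 else i - 1)"
        have j: "j \<in> S21_V k" "sig j = i" using i False by (auto simp: j_def S21_V_def sig_def)
        have "restrict (\<lambda>j. f (sig j)) (S21_V k) j = restrict (\<lambda>j. g (sig j)) (S21_V k) j"
          using er by simp
        then show ?thesis using j by simp
      qed
    qed
  qed
  have "card A \<le> card (V \<times> B)"
    using card_inj_on_le[OF inj maps] finB assms by simp
  then show ?thesis unfolding hom_count_def A_def[symmetric] B_def[symmetric]
    by (simp add: card_cartesian_product)
qed

lemma S0_count: "hom_count S0_V S0_E V E = card V"
proof -
  have "hom_count S0_V S0_E V E = card ({1::nat} \<rightarrow>\<^sub>E V)"
    unfolding hom_count_def S0_V_def S0_E_def by simp
  also have "\<dots> = card V" by (simp add: card_PiE)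
  finally show ?thesis .
qed

theorem theorem3p1:
  fixes m :: nat and V :: "'a set" and E :: "'a \<Rightarrow> 'a \<Rightarrow> bool"
  assumes "m \<ge> 2" and "graph V E"
  shows "hom_count S0_V S0_E V E * hom_count (S21_V (m - 2)) (S21_E (m - 2)) V E
           \<ge> hom_count (S21_V (m - 1)) (S21_E (m - 1)) V E"
proof -
  have fin: "finite V" using assms(2) unfolding graph_def by simp
  have "m - 1 = Suc (m - 2)" using assms(1) by simp
  then show ?thesis using main[OF fin, of "m - 2" E] S0_count[of V E] by simp
qed

end
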